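(* Let $K$ be a ramified quadratic extension of $\mathbb{Q}_2$, $d=2m$ with $m$ odd, $m\ge3$, and $f=a_1x_1^d+\dots+a_sx_s^d$ with all $a_i\in\mathcal{O}\setminus\{0\}$. Suppose that for some level $k$, $f$ has two variables at level $k$ with the same $\pi$-coefficient, and either $f$ has a variable at level $k+2$ and a variable at level $k+3$, or $f$ has a variable at level $k+3$ and a variable at level $k+4$. Then $f$ has a nontrivial zero in $K$.
   Context: $\mathcal{O}$ is the ring of integers of $K$ and $\pi$ the uniformizer: $\pi=\sqrt{2},\sqrt{-2},\sqrt{10},\sqrt{-10},1+\sqrt{-1},1+\sqrt{-5}$ for $K=\mathbb{Q}_2(\sqrt2),\mathbb{Q}_2(\sqrt{-2}),\mathbb{Q}_2(\sqrt{10}),\mathbb{Q}_2(\sqrt{-10}),\mathbb{Q}_2(\sqrt{-1}),\mathbb{Q}_2(\sqrt{-5})$ respectively. Each unit $u$ has a unique expansion $u=c_0+c_1\pi+c_2\pi^2+\cdots$ with $c_j\in\{0,1\}$, $c_0=1$. Writing $a_i=\pi^r u$ with $u$ a unit, the variable $x_i$ is at level $r\bmod d$ (levels are residues modulo $d$), and its $\pi$-coefficient is $c_1$ of $u$. A nontrivial zero is a point of $K^s$, not all coordinates zero, where $f$ vanishes. *)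

theory Defs
  imports Main
begin

type_synonym z2 = "nat \<Rightarrow> int"

text \<open>x n is the residue of the 2-adic integer modulo 2^n, in canonical range.\<close>
definition Z2 :: "z2 set" where
  "Z2 = {x. \<forall>n. 0 \<le> x n \<and> x n < 2 ^ n \<and> x (Suc n) mod 2 ^ n = x n}"

definition z2_of_int :: "int \<Rightarrow> z2" where
  "z2_of_int k = (\<lambda>n. k mod 2 ^ n)"

definition z2_add :: "z2 \<Rightarrow> z2 \<Rightarrow> z2" where
  "z2_add x y = (\<lambda>n. (x n + y n) mod 2 ^ n)"

definition z2_mul :: "z2 \<Rightarrow> z2 \<Rightarrow> z2" where
  "z2_mul x y = (\<lambda>n. (x n * y n) mod 2 ^ n)"

text \<open>Elements of O are pairs (a,b) standing for a + b*pi, with a, b 2-adic integers.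
  The uniformizer pi satisfies pi^2 = t*pi - n, where (t,n) = Kpar D.
  K = Q_2(sqrt D) with D in {2,-2,10,-10,-1,-5}; pi = sqrt D for D in {2,-2,10,-10},
  pi = 1 + sqrt D for D in {-1,-5} (so pi^2 = 2 pi + D - 1).\<close>

type_synonym ok = "z2 \<times> z2"

definition Kpar :: "int \<Rightarrow> int \<times> int" where
  "Kpar D = (if D \<in> {-1, -5} then (2, 1 - D) else (0, - D))"

definition O_set :: "ok set" where
  "O_set = Z2 \<times> Z2"

definition ok_zero :: ok where "ok_zero = (z2_of_int 0, z2_of_int 0)"
definition ok_one :: ok where "ok_one = (z2_of_int 1, z2_of_int 0)"
definition ok_pi :: ok where "ok_pi = (z2_of_int 0, z2_of_int 1)"

definition ok_add :: "ok \<Rightarrow> ok \<Rightarrow> ok" where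
  "ok_add u v = (z2_add (fst u) (fst v), z2_add (snd u) (snd v))"

definition ok_mul :: "int \<Rightarrow> ok \<Rightarrow> ok \<Rightarrow> ok" where
  "ok_mul D u v =
    (let (t, n) = Kpar D; (a, b) = u; (c, e) = v in
      (z2_add (z2_mul a c) (z2_mul (z2_of_int (- n)) (z2_mul b e)),
       z2_add (z2_add (z2_mul a e) (z2_mul b c)) (z2_mul (z2_of_int t) (z2_mul b e))))"

primrec ok_pow :: "int \<Rightarrow> ok \<Rightarrow> nat \<Rightarrow> ok" where
  "ok_pow D u 0 = ok_one"
| "ok_pow D u (Suc k) = ok_mul D (ok_pow D u k) u"

primrec ok_sum :: "(nat \<Rightarrow> ok) \<Rightarrow> nat \<Rightarrow> ok" where
  "ok_sum g 0 = ok_zero"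
| "ok_sum g (Suc k) = ok_add (ok_sum g k) (g k)"

definition ok_unit :: "int \<Rightarrow> ok \<Rightarrow> bool" where
  "ok_unit D u \<longleftrightarrow> u \<in> O_set \<and> (\<exists>v\<in>O_set. ok_mul D u v = ok_one)"

definition ok_ord :: "int \<Rightarrow> ok \<Rightarrow> nat" where
  "ok_ord D a = (LEAST r. \<exists>u. ok_unit D u \<and> a = ok_mul D (ok_pow D ok_pi r) u)"

definition ok_unitpart :: "int \<Rightarrow> ok \<Rightarrow> ok" where
  "ok_unitpart D a = (SOME u. ok_unit D u \<and> a = ok_mul D (ok_pow D ok_pi (ok_ord D a)) u)"

text \<open>The pi-coefficient c_1 of a unit u = 1 + c_1 pi + c_2 pi^2 + ... (c_j in {0,1}):
  the unique c in {0,1} with u = 1 + c*pi + pi^2 * w for some w in O.\<close>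
definition pi_coeff :: "int \<Rightarrow> ok \<Rightarrow> nat" where
  "pi_coeff D u = (THE c. c \<in> {0, 1} \<and>
     (\<exists>w\<in>O_set. u = ok_add (ok_add ok_one (ok_mul D (z2_of_int (int c), z2_of_int 0) ok_pi))
                             (ok_mul D (ok_pow D ok_pi 2) w)))"

definition level :: "int \<Rightarrow> nat \<Rightarrow> ok \<Rightarrow> nat" where
  "level D d a = ok_ord D a mod d"

definition var_pi_coeff :: "int \<Rightarrow> ok \<Rightarrow> nat" where
  "var_pi_coeff D a = pi_coeff D (ok_unitpart D a)"

end

theory Submission
  imports Defs "HOL-Number_Theory.Cong"
begin

lemma Z2_range: "x \<in> Z2 \<Longrightarrow> 0 \<le> x n \<and> x n < 2 ^ n"
  by (simp add: Z2_def)

lemma Z2_mod: "x \<in> Z2 \<Longrightarrow> x n mod 2 ^ n = x n"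
  using Z2_range[of x n] by simp

lemma Z2_coh: "x \<in> Z2 \<Longrightarrow> x (Suc n) mod 2 ^ n = x n"
  by (simp add: Z2_def)

lemma Z2_coh_le: "x \<in> Z2 \<Longrightarrow> j \<le> n \<Longrightarrow> x n mod 2 ^ j = x j"
proof (induction n)
  case 0 then show ?case using Z2_range[of x 0] by simp
next
  case (Suc n)
  show ?case
  proof (cases "j = Suc n")
    case True then show ?thesis using Suc Z2_mod[of x "Suc n"] by simp
  next
    case False
    then have "j \<le> n" using Suc by simp
    have "x (Suc n) mod 2 ^ j = (x (Suc n) mod 2 ^ n) mod 2 ^ j"
      using \<open>j \<le> n\<close> by (simp add: mod_mod_cancel le_imp_power_dvd)
    also have "\<dots> = x j" using Suc \<open>j \<le> n\<close> by (simp add: Z2_coh)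
    finally show ?thesis .
  qed
qed

lemma Z2_modI:
  assumes "\<And>n. F (Suc n) mod 2 ^ n = F n mod 2 ^ n"
  shows "(\<lambda>n. F n mod 2 ^ n) \<in> Z2"
proof -
  have "(F (Suc n) mod 2 ^ Suc n) mod 2 ^ n = F n mod 2 ^ n" for n
    using assms[of n] by (simp add: mod_mod_cancel)
  then show ?thesis by (simp add: Z2_def)
qed

lemma Z2_eqI: "x \<in> Z2 \<Longrightarrow> y \<in> Z2 \<Longrightarrow> (\<And>n. x n mod 2 ^ n = y n mod 2 ^ n) \<Longrightarrow> x = y"
  by (rule ext) (metis Z2_mod)

lemma Z2_cohmod: "x \<in> Z2 \<Longrightarrow> x (Suc n) mod 2 ^ n = x n mod 2 ^ n"
  by (simp add: Z2_coh Z2_mod)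

lemma z2_of_int_Z2: "z2_of_int k \<in> Z2"
  unfolding z2_of_int_def Z2_def by (simp add: mod_mod_cancel)

lemma z2_of_int_app: "z2_of_int k n = k mod 2 ^ n"
  by (simp add: z2_of_int_def)

abbreviation "tK D \<equiv> fst (Kpar D)"
abbreviation "nK D \<equiv> snd (Kpar D)"

lemma fst_ok_add: "fst (ok_add u v) n = (fst u n + fst v n) mod 2 ^ n"
  by (simp add: ok_add_def z2_add_def)
lemma snd_ok_add: "snd (ok_add u v) n = (snd u n + snd v n) mod 2 ^ n"
  by (simp add: ok_add_def z2_add_def)

lemma fst_ok_mul: "fst (ok_mul D u v) n = (fst u n * fst v n - nK D * (snd u n * snd v n)) mod 2 ^ n"
  by (simp add: ok_mul_def z2_add_def z2_mul_def z2_of_int_def split_def Let_def mod_simps)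

lemma snd_ok_mul: "snd (ok_mul D u v) n = (fst u n * snd v n + snd u n * fst v n + tK D * (snd u n * snd v n)) mod 2 ^ n"
  by (simp add: ok_mul_def z2_add_def z2_mul_def z2_of_int_def split_def Let_def mod_simps)

lemma O_set_iff: "u \<in> O_set \<longleftrightarrow> fst u \<in> Z2 \<and> snd u \<in> Z2"
  by (cases u) (simp add: O_set_def)

lemma cohI: "x \<in> Z2 \<Longrightarrow> [x (Suc n) = x n] (mod 2 ^ n)"
  by (simp add: cong_def Z2_cohmod)

lemma ok_add_O: "u \<in> O_set \<Longrightarrow> v \<in> O_set \<Longrightarrow> ok_add u v \<in> O_set"
proof -
  assume u: "u \<in> O_set" and v: "v \<in> O_set"
  have 1: "fst (ok_add u v) = (\<lambda>n. (fst u n + fst v n) mod 2 ^ n)" by (rule ext) (simp add: fst_ok_add)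
  have 2: "snd (ok_add u v) = (\<lambda>n. (snd u n + snd v n) mod 2 ^ n)" by (rule ext) (simp add: snd_ok_add)
  show ?thesis unfolding O_set_iff 1 2
    apply (intro conjI; rule Z2_modI; fold cong_def)
    using u v unfolding O_set_iff by (intro cong_add cohI; simp)+
qed

lemma ok_mul_O: "u \<in> O_set \<Longrightarrow> v \<in> O_set \<Longrightarrow> ok_mul D u v \<in> O_set"
proof -
  assume u: "u \<in> O_set" and v: "v \<in> O_set"
  have 1: "fst (ok_mul D u v) = (\<lambda>n. (fst u n * fst v n - nK D * (snd u n * snd v n)) mod 2 ^ n)" by (rule ext) (simp add: fst_ok_mul)
  have 2: "snd (ok_mul D u v) = (\<lambda>n. (fst u n * snd v n + snd u n * fst v n + tK D * (snd u n * snd v n)) mod 2 ^ n)" by (rule ext) (simp add: snd_ok_mul)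
  show ?thesis unfolding O_set_iff 1 2
    apply (intro conjI; rule Z2_modI; fold cong_def)
    using u v unfolding O_set_iff by (intro cong_add cong_mult cong_diff cong_refl cohI; simp)+
qed

definition ok_neg :: "ok \<Rightarrow> ok" where
  "ok_neg u = ((\<lambda>n. (- fst u n) mod 2 ^ n), (\<lambda>n. (- snd u n) mod 2 ^ n))"

lemma ok_neg_O: "u \<in> O_set \<Longrightarrow> ok_neg u \<in> O_set"
  unfolding O_set_iff ok_neg_def
  apply (simp only: fst_conv snd_conv)
  apply (intro conjI; rule Z2_modI; fold cong_def)
  by (intro cong_minus_minus_iff[THEN iffD2] cohI; simp)+

lemma ok_consts_O: "ok_zero \<in> O_set" "ok_one \<in> O_set" "ok_pi \<in> O_set"
  by (simp_all add: ok_zero_def ok_one_def ok_pi_def O_set_def z2_of_int_Z2)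

lemma O_eqI: "u \<in> O_set \<Longrightarrow> v \<in> O_set \<Longrightarrow> (\<And>n. fst u n mod 2 ^ n = fst v n mod 2 ^ n)
   \<Longrightarrow> (\<And>n. snd u n mod 2 ^ n = snd v n mod 2 ^ n) \<Longrightarrow> u = v"
  unfolding O_set_iff by (metis Z2_eqI prod.expand)

class dpar =
  fixes dval :: "'a itself \<Rightarrow> int"
  assumes dval_in: "dval TYPE('a) \<in> {2, -2, 10, -10, -1, -5}"

typedef ('a::dpar) okt = "O_set" morphisms Rep Abs
  by (rule exI[of _ ok_zero]) (simp add: ok_consts_O)

lemma fst_ok_neg: "fst (ok_neg u) n = (- fst u n) mod 2 ^ n"
  by (simp add: ok_neg_def)
lemma snd_ok_neg: "snd (ok_neg u) n = (- snd u n) mod 2 ^ n"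
  by (simp add: ok_neg_def)

lemma e_add: "[a = a'] (mod m) \<Longrightarrow> [b = b'] (mod m) \<Longrightarrow> [a + b = a' + b'] (mod m)"
  by (rule cong_add)
lemma e_diff: "[a = a'] (mod m) \<Longrightarrow> [b = b'] (mod m) \<Longrightarrow> [a - b = a' - b'] (mod m)"
  for a :: int by (rule cong_diff)
lemma e_mult: "[a = a'] (mod m) \<Longrightarrow> [b = b'] (mod m) \<Longrightarrow> [a * b = a' * b'] (mod m)"
  by (rule cong_mult)
lemma e_neg: "[a = a'] (mod m) \<Longrightarrow> [- a = - a'] (mod m)"
  for a :: int by (simp add: cong_minus_minus_iff)
lemma e_mod: "[a = a'] (mod m) \<Longrightarrow> [a mod m = a'] (mod m)"
  for a :: int by (simp add: cong_def)
lemma cong_by_erase: "[L = P] (mod m) \<Longrightarrow> [R = Q] (mod m) \<Longrightarrow> P = Q \<Longrightarrow> [L = R] (mod m)"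
  for L :: int by (metis cong_sym cong_trans)
lemmas e_rules = e_mod e_add e_diff e_mult e_neg cong_refl

lemmas lev_simps = fst_ok_add snd_ok_add fst_ok_mul snd_ok_mul fst_ok_neg snd_ok_neg

instantiation okt :: (dpar) comm_ring_1
begin
definition zero_okt_def: "0 = Abs ok_zero"
definition one_okt_def: "1 = Abs ok_one"
definition plus_okt_def: "x + y = Abs (ok_add (Rep x) (Rep y))"
definition times_okt_def: "x * y = Abs (ok_mul (dval TYPE('a)) (Rep x) (Rep y))"
definition uminus_okt_def: "- x = Abs (ok_neg (Rep x))"
definition minus_okt_def: "x - y = x + - (y::'a okt)"

lemma Rep_ops:
  "Rep (0::'a okt) = ok_zero" "Rep (1::'a okt) = ok_one"
  "Rep (x + y) = ok_add (Rep x) (Rep y)"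
  "Rep (x * y) = ok_mul (dval TYPE('a)) (Rep x) (Rep y)"
  "Rep (- x) = ok_neg (Rep x)"
  by (simp_all add: zero_okt_def one_okt_def plus_okt_def times_okt_def uminus_okt_def
       Abs_inverse ok_consts_O ok_add_O ok_mul_O ok_neg_O Rep)

lemma eq_via_Rep: "Rep x \<in> O_set \<Longrightarrow> Rep y \<in> O_set \<Longrightarrow> (\<And>n. fst (Rep x) n mod 2 ^ n = fst (Rep y) n mod 2 ^ n)
   \<Longrightarrow> (\<And>n. snd (Rep x) n mod 2 ^ n = snd (Rep y) n mod 2 ^ n) \<Longrightarrow> x = (y::'a okt)"
  using O_eqI Rep_inject by blast

instance
proof
  fix a b c :: "'a okt"
  show "a * b * c = a * (b * c)"
    by (rule eq_via_Rep, (simp add: Rep)+; simp add: Rep_ops lev_simps; fold cong_def; rule cong_by_erase, (rule e_rules)+, simp add: algebra_simps)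
  show "a * b = b * a"
    by (rule eq_via_Rep, (simp add: Rep)+; simp add: Rep_ops lev_simps; fold cong_def; rule cong_by_erase, (rule e_rules)+, simp add: algebra_simps)
  show "1 * a = a"
    by (rule eq_via_Rep, (simp add: Rep)+; simp add: Rep_ops lev_simps ok_one_def z2_of_int_app; fold cong_def; rule cong_by_erase, (rule e_rules)+, simp add: algebra_simps)
  show "a + b + c = a + (b + c)"
    by (rule eq_via_Rep, (simp add: Rep)+; simp add: Rep_ops lev_simps; fold cong_def; rule cong_by_erase, (rule e_rules)+, simp add: algebra_simps)
  show "a + b = b + a"
    by (rule eq_via_Rep, (simp add: Rep)+; simp add: Rep_ops lev_simps; fold cong_def; rule cong_by_erase, (rule e_rules)+, simp add: algebra_simps)
  show "0 + a = a"
    by (rule eq_via_Rep, (simp add: Rep)+; simp add: Rep_ops lev_simps mod_simps ok_zero_def z2_of_int_app)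
  show "- a + a = 0"
    by (rule eq_via_Rep, (simp add: Rep)+; simp add: Rep_ops lev_simps mod_simps ok_zero_def z2_of_int_app)
  show "a - b = a + - b" by (simp add: minus_okt_def)
  show "(a + b) * c = a * c + b * c"
    by (rule eq_via_Rep, (simp add: Rep)+; simp add: Rep_ops lev_simps; fold cong_def; rule cong_by_erase, (rule e_rules)+, simp add: algebra_simps)
  show "(0::'a okt) \<noteq> 1"
  proof
    assume "(0::'a okt) = 1"
    then have "Rep (0::'a okt) = Rep (1::'a okt)" by simp
    then have "fst ok_zero 1 = fst ok_one 1" by (simp add: Rep_ops)
    then show False by (simp add: ok_zero_def ok_one_def z2_of_int_app)
  qed
qed
end

abbreviation DD :: "'a::dpar itself \<Rightarrow> int" where "DD t \<equiv> dval t"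

definition emb :: "int \<Rightarrow> 'a::dpar okt" where "emb k = Abs (z2_of_int k, z2_of_int 0)"

lemma Rep_emb: "Rep (emb k :: 'a::dpar okt) = (z2_of_int k, z2_of_int 0)"
  by (simp add: emb_def Abs_inverse O_set_def z2_of_int_Z2)

lemma emb_add: "emb k + emb l = (emb (k + l) :: 'a::dpar okt)"
  by (rule eq_via_Rep, (simp add: Rep)+; simp add: Rep_ops lev_simps Rep_emb z2_of_int_app mod_simps)

lemma emb_neg: "- emb k = (emb (- k) :: 'a::dpar okt)"
  by (rule eq_via_Rep, (simp add: Rep)+; simp add: Rep_ops lev_simps Rep_emb z2_of_int_app mod_simps)

lemma emb_one: "emb 1 = (1 :: 'a::dpar okt)"
  by (simp add: emb_def one_okt_def ok_one_def)

lemma emb_zero: "emb 0 = (0 :: 'a::dpar okt)"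
  by (simp add: emb_def zero_okt_def ok_zero_def)

lemma of_nat_emb: "(of_nat n :: 'a::dpar okt) = emb (int n)"
  by (induction n) (simp_all add: emb_zero emb_one emb_add[symmetric] add.commute)

lemma of_int_emb: "(of_int k :: 'a::dpar okt) = emb k"
proof (cases "k \<ge> 0")
  case True
  then have "k = int (nat k)" by simp
  then show ?thesis by (metis of_int_of_nat_eq of_nat_emb)
next
  case False
  then have "k = - int (nat (- k))" by simp
  then show ?thesis by (metis emb_neg of_int_minus of_int_of_nat_eq of_nat_emb)
qed

lemma Rep_of_int: "Rep (of_int k :: 'a::dpar okt) = (z2_of_int k, z2_of_int 0)"
  by (simp add: of_int_emb Rep_emb)

lemma Rep_in: "Rep x \<in> O_set" by (rule Rep)

lemma Rep_Z2: "fst (Rep x) \<in> Z2" "snd (Rep x) \<in> Z2"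
  using Rep[of x] by (simp_all add: O_set_iff)

lemma lev_of_int_mul:
  "fst (Rep (of_int k * y :: 'a::dpar okt)) n = (k * fst (Rep y) n) mod 2 ^ n"
  "snd (Rep (of_int k * y :: 'a::dpar okt)) n = (k * snd (Rep y) n) mod 2 ^ n"
  by (simp_all add: Rep_ops lev_simps Rep_of_int z2_of_int_app mod_simps)

lemma lev_diff:
  "fst (Rep (x - y :: 'a::dpar okt)) n = (fst (Rep x) n - fst (Rep y) n) mod 2 ^ n"
  "snd (Rep (x - y :: 'a::dpar okt)) n = (snd (Rep x) n - snd (Rep y) n) mod 2 ^ n"
  unfolding minus_okt_def Rep_ops lev_simps by (simp_all only: mod_add_right_eq diff_conv_add_uminus)

lemma two_pow_dvd_lev:
  assumes "(2::'a::dpar okt) ^ n dvd x"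
  shows "fst (Rep x) n = 0 \<and> snd (Rep x) n = 0"
proof -
  obtain y where y: "x = 2 ^ n * y" using assms by (rule dvdE)
  have "(2::'a okt) ^ n = of_int (2 ^ n)" by simp
  then have "x = of_int (2 ^ n) * y" using y by simp
  then show ?thesis using lev_of_int_mul[of "2 ^ n" y n] by simp
qed

lemma lev_zero_dvd:
  assumes "fst (Rep x) n = 0" "snd (Rep x) n = 0"
  shows "(2::'a::dpar okt) ^ n dvd x"
proof -
  define f where "f = fst (Rep x)"
  define g where "g = snd (Rep x)"
  have fZ: "f \<in> Z2" and gZ: "g \<in> Z2" using Rep_Z2 f_def g_def by auto
  have dvf: "2 ^ n dvd f (j + n)" for j
  proof -
    have "f (j + n) mod 2 ^ n = f n" using Z2_coh_le[OF fZ, of n "j + n"] by simp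
    then show ?thesis using assms f_def by (simp add: dvd_eq_mod_eq_0)
  qed
  have dvg: "2 ^ n dvd g (j + n)" for j
  proof -
    have "g (j + n) mod 2 ^ n = g n" using Z2_coh_le[OF gZ, of n "j + n"] by simp
    then show ?thesis using assms g_def by (simp add: dvd_eq_mod_eq_0)
  qed
  define f' where "f' = (\<lambda>j. f (j + n) div 2 ^ n)"
  define g' where "g' = (\<lambda>j. g (j + n) div 2 ^ n)"
  have f'eq: "f (j + n) = 2 ^ n * f' j" for j using dvf[of j] f'_def by simp
  have g'eq: "g (j + n) = 2 ^ n * g' j" for j using dvg[of j] g'_def by simp
  have Zlem: "h' \<in> Z2" if hZ: "h \<in> Z2" and heq: "\<And>j. h (j + n) = 2 ^ n * h' j" for h h'
  proof -
    have "0 \<le> h' j \<and> h' j < 2 ^ j" for j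
    proof -
      have "0 \<le> h (j + n)" "h (j + n) < 2 ^ (j + n)" using Z2_range[OF hZ] by auto
      then show ?thesis unfolding heq by (simp add: power_add zero_le_mult_iff mult.commute)
    qed
    moreover have "h' (Suc j) mod 2 ^ j = h' j" for j
    proof -
      have "h (Suc j + n) mod 2 ^ (j + n) = h (j + n)"
        using Z2_coh[OF hZ, of "j + n"] by simp
      moreover have "(2::int) ^ (j + n) = 2 ^ n * 2 ^ j" by (simp add: power_add)
      ultimately have "(2 ^ n * h' (Suc j)) mod (2 ^ n * 2 ^ j) = 2 ^ n * h' j"
        unfolding heq by simp
      then have "2 ^ n * (h' (Suc j) mod 2 ^ j) = 2 ^ n * h' j"
        by (simp only: mult_mod_right)
      then show ?thesis by simp
    qed
    ultimately show ?thesis by (simp add: Z2_def)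
  qed
  have yO: "(f', g') \<in> O_set" using Zlem[OF fZ f'eq] Zlem[OF gZ g'eq] by (simp add: O_set_def)
  have "x = of_int (2 ^ n) * Abs (f', g')"
  proof (rule eq_via_Rep)
    fix j
    show "fst (Rep x) j mod 2 ^ j = fst (Rep (of_int (2 ^ n) * Abs (f', g') :: 'a okt)) j mod 2 ^ j"
    proof -
      have "fst (Rep (of_int (2 ^ n) * Abs (f', g') :: 'a okt)) j = (2 ^ n * f' j) mod 2 ^ j"
        by (simp only: lev_of_int_mul Abs_inverse[OF yO] fst_conv)
      then show ?thesis using f'eq[of j] Z2_coh_le[OF fZ, of j "j + n"] f_def by simp
    qed
    show "snd (Rep x) j mod 2 ^ j = snd (Rep (of_int (2 ^ n) * Abs (f', g') :: 'a okt)) j mod 2 ^ j"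
    proof -
      have "snd (Rep (of_int (2 ^ n) * Abs (f', g') :: 'a okt)) j = (2 ^ n * g' j) mod 2 ^ j"
        by (simp only: lev_of_int_mul Abs_inverse[OF yO] snd_conv)
      then show ?thesis using g'eq[of j] Z2_coh_le[OF gZ, of j "j + n"] g_def by simp
    qed
  qed (simp_all add: Rep)
  moreover have "(of_int (2 ^ n) :: 'a okt) = 2 ^ n" by simp
  ultimately show ?thesis by (metis dvd_triv_left)
qed

lemma two_pow_dvd_iff: "((2::'a::dpar okt) ^ n dvd x) \<longleftrightarrow> fst (Rep x) n = 0 \<and> snd (Rep x) n = 0"
  using two_pow_dvd_lev lev_zero_dvd by blast

lemma krull2: "(\<And>n. (2::'a::dpar okt) ^ n dvd x) \<Longrightarrow> x = 0"
  by (rule eq_via_Rep[OF Rep_in Rep_in]) (simp_all add: two_pow_dvd_iff Rep_ops ok_zero_def z2_of_int_app)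

lemma limit2:
  fixes s :: "nat \<Rightarrow> 'a::dpar okt"
  assumes "\<And>n. 2 ^ n dvd s (Suc n) - s n"
  shows "\<exists>L. \<forall>n. 2 ^ n dvd L - s n"
proof -
  define f where "f = (\<lambda>n. fst (Rep (s n)) n)"
  define g where "g = (\<lambda>n. snd (Rep (s n)) n)"
  have lv: "fst (Rep (s (Suc n))) n = fst (Rep (s n)) n \<and> snd (Rep (s (Suc n))) n = snd (Rep (s n)) n" for n
  proof -
    have "fst (Rep (s (Suc n) - s n)) n = 0 \<and> snd (Rep (s (Suc n) - s n)) n = 0"
      using assms two_pow_dvd_iff by blast
    then have "(fst (Rep (s (Suc n))) n - fst (Rep (s n)) n) mod 2 ^ n = 0 \<and> (snd (Rep (s (Suc n))) n - snd (Rep (s n)) n) mod 2 ^ n = 0"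
      by (simp add: lev_diff)
    then show ?thesis using Z2_mod[OF Rep_Z2(1), of "s n" n] Z2_mod[OF Rep_Z2(1), of "s (Suc n)" n]
       Z2_mod[OF Rep_Z2(2), of "s n" n] Z2_mod[OF Rep_Z2(2), of "s (Suc n)" n]
      by (metis mod_eq_dvd_iff dvd_eq_mod_eq_0)
  qed
  have fZ: "f \<in> Z2"
    unfolding Z2_def f_def
  proof (intro CollectI allI conjI)
    fix n
    show "0 \<le> fst (Rep (s n)) n" "fst (Rep (s n)) n < 2 ^ n" using Z2_range[OF Rep_Z2(1)] by auto
    show "fst (Rep (s (Suc n))) (Suc n) mod 2 ^ n = fst (Rep (s n)) n"
      using Z2_coh[OF Rep_Z2(1), of "s (Suc n)" n] lv[of n] by simp
  qed
  have gZ: "g \<in> Z2"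
    unfolding Z2_def g_def
  proof (intro CollectI allI conjI)
    fix n
    show "0 \<le> snd (Rep (s n)) n" "snd (Rep (s n)) n < 2 ^ n" using Z2_range[OF Rep_Z2(2)] by auto
    show "snd (Rep (s (Suc n))) (Suc n) mod 2 ^ n = snd (Rep (s n)) n"
      using Z2_coh[OF Rep_Z2(2), of "s (Suc n)" n] lv[of n] by simp
  qed
  have LO: "(f, g) \<in> O_set" using fZ gZ by (simp add: O_set_def)
  show ?thesis
  proof (rule exI[of _ "Abs (f, g)"], intro allI)
    fix n
    show "2 ^ n dvd Abs (f, g) - s n"
      unfolding two_pow_dvd_iff lev_diff Abs_inverse[OF LO] by (simp add: f_def g_def)
  qed
qed

lemma dvd_pow_diff: "x - y dvd x ^ n - (y::'a::comm_ring_1) ^ n"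
proof (cases n)
  case 0 then show ?thesis by simp
next
  case (Suc k) then show ?thesis using diff_power_eq_sum[of x k y] by simp
qed

lemma Kpar_props:
  "tK (DD TYPE('a::dpar)) = 2 * (tK (DD TYPE('a)) div 2) \<and>
   nK (DD TYPE('a)) = -2 * (- nK (DD TYPE('a)) div 2) \<and> odd (- nK (DD TYPE('a)) div 2)"
  using dval_in[where 'a='a] by (auto simp: Kpar_def)

definition pp :: "'a::dpar okt" where "pp = Abs ok_pi"

lemma Rep_pp: "Rep pp = ok_pi"
  by (simp add: pp_def Abs_inverse ok_consts_O)

lemma pp_sq: "(pp::'a::dpar okt) * pp = of_int (tK (DD TYPE('a))) * pp - of_int (nK (DD TYPE('a)))"
  by (rule eq_via_Rep[OF Rep_in Rep_in]; simp only: lev_diff lev_of_int_mul Rep_ops lev_simps Rep_of_int Rep_pp;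
      simp add: ok_pi_def z2_of_int_app mod_simps)

definition eta :: "'a::dpar okt" where
  "eta = of_int (- nK (DD TYPE('a)) div 2) + of_int (tK (DD TYPE('a)) div 2) * pp"

lemma pp_sq_eta: "(pp::'a::dpar okt) ^ 2 = 2 * eta"
proof -
  define a where "a = - nK (DD TYPE('a)) div 2"
  define b where "b = tK (DD TYPE('a)) div 2"
  have t: "tK (DD TYPE('a)) = 2 * b" and n: "nK (DD TYPE('a)) = -2 * a"
    using Kpar_props[where 'a='a] a_def b_def by auto
  have "(pp::'a okt) ^ 2 = of_int (2 * b) * pp - of_int (-2 * a)"
    using pp_sq[where 'a='a] t n by (simp add: power2_eq_square)
  also have "\<dots> = 2 * (of_int a + of_int b * pp)" by (simp add: algebra_simps)
  finally show ?thesis by (simp add: eta_def a_def b_def)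
qed

lemma inv2:
  fixes u :: "'a::dpar okt"
  assumes "2 dvd 1 - u"
  shows "\<exists>v. u * v = 1"
proof -
  define s where "s = (\<lambda>n. \<Sum>i<n. (1 - u) ^ i)"
  have d: "2 ^ n dvd (1 - u) ^ n" for n using assms by (simp add: dvd_power_same)
  have "2 ^ n dvd s (Suc n) - s n" for n using d[of n] by (simp add: s_def)
  then obtain L where L: "\<And>n. 2 ^ n dvd L - s n" using limit2 by blast
  have us: "u * s n = 1 - (1 - u) ^ n" for n
    using one_diff_power_eq[of "1 - u" n] by (simp add: s_def)
  have "2 ^ n dvd u * L - 1" for n
  proof -
    have "u * L - 1 = u * (L - s n) - (1 - u) ^ n" using us[of n] by (simp add: algebra_simps)
    then show ?thesis using L[of n] d[of n] by (simp add: dvd_diff)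
  qed
  then have "u * L - 1 = 0" by (rule krull2)
  then show ?thesis by auto
qed

lemma eta_unit: "\<exists>v. (eta::'a::dpar okt) * v = 1"
proof -
  define a where "a = - nK (DD TYPE('a)) div 2"
  define b where "b = tK (DD TYPE('a)) div 2"
  define t where "t = tK (DD TYPE('a))"
  define n where "n = nK (DD TYPE('a))"
  have t: "t = 2 * b" and n: "n = -2 * a" and oa: "odd a"
    using Kpar_props[where 'a='a] a_def b_def t_def n_def by auto
  define N where "N = a * a + a * b * t + b * b * n"
  have ppsq: "(pp::'a okt) * pp = of_int t * pp - of_int n" using pp_sq t_def n_def by simp
  have eN: "(eta::'a okt) * (of_int (a + b * t) - of_int b * pp) = of_int N"
  proof -
    have "(eta::'a okt) * (of_int (a + b * t) - of_int b * pp)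
       = of_int a * of_int (a + b * t) + of_int b * of_int t * of_int b * pp - of_int b * of_int b * (pp * pp)"
      by (simp add: eta_def a_def b_def algebra_simps)
    also have "\<dots> = of_int N" unfolding ppsq N_def by (simp add: algebra_simps)
    finally show ?thesis .
  qed
  have "odd N" using oa t n by (simp add: N_def)
  then have "even (1 - N)" by simp
  then obtain k where k: "1 - N = 2 * k" by (rule evenE)
  have "(1::'a okt) - of_int N = of_int (1 - N)" by simp
  also have "\<dots> = 2 * of_int k" unfolding k by simp
  finally have "(2::'a okt) dvd 1 - of_int N" by simp
  then obtain w where w: "of_int N * w = (1::'a okt)" using inv2 by blast
  have "eta * ((of_int (a + b * t) - of_int b * pp) * w) = (1::'a okt)"
    using eN w by (simp add: mult.assoc[symmetric])
  then show ?thesis by blast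
qed

lemma pp2_dvd_2: "(pp::'a::dpar okt) ^ 2 dvd 2"
proof -
  obtain v where v: "(eta::'a okt) * v = 1" using eta_unit by blast
  have "(2::'a okt) = pp ^ 2 * v" by (simp add: pp_sq_eta mult.assoc v)
  then show ?thesis by (rule dvdI)
qed

lemma pp_dvd_2: "(pp::'a::dpar okt) dvd 2"
proof -
  have "(pp::'a okt) dvd pp ^ 2" by (simp add: power2_eq_square)
  then show ?thesis using pp2_dvd_2 by (rule dvd_trans)
qed

lemma two_pow_dvd_pp: "(2::'a::dpar okt) ^ n dvd pp ^ (2 * n)"
  by (simp add: power_mult pp_sq_eta power_mult_distrib)

lemma residue: "(pp::'a::dpar okt) dvd x \<or> pp dvd x - 1"
proof -
  define c0 where "c0 = fst (Rep x) 1"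
  define c1 where "c1 = snd (Rep x) 1"
  have c0: "c0 = 0 \<or> c0 = 1" using Z2_range[OF Rep_Z2(1), of x 1] c0_def by auto
  have l1: "fst (Rep (of_int c1 * pp :: 'a okt)) 1 = 0" "snd (Rep (of_int c1 * pp :: 'a okt)) 1 = c1 mod 2"
    by (simp_all add: lev_of_int_mul Rep_pp ok_pi_def z2_of_int_app)
  have "(2::'a okt) ^ 1 dvd x - of_int c0 - of_int c1 * pp"
    unfolding two_pow_dvd_iff lev_diff l1
    by (simp add: Rep_of_int z2_of_int_app c0_def c1_def mod_simps)
  then have "pp dvd x - of_int c0 - of_int c1 * pp" using pp_dvd_2 dvd_trans by auto
  moreover have "pp dvd of_int c1 * pp" by simp
  ultimately have "pp dvd (x - of_int c0 - of_int c1 * pp) + of_int c1 * pp" by (rule dvd_add)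
  then have "pp dvd x - of_int c0" by simp
  then show ?thesis using c0 by auto
qed

lemma pp_not_dvd_1: "\<not> (pp::'a::dpar okt) dvd 1"
proof
  assume "pp dvd (1::'a okt)"
  from this this have "pp * pp dvd (1::'a okt) * 1" by (rule mult_dvd_mono)
  then have "2 * eta dvd (1::'a okt)" using pp_sq_eta[where 'a='a] by (simp add: power2_eq_square)
  then have "(2::'a okt) dvd 1" by (rule dvd_mult_left)
  then have "(2::'a okt) ^ 1 dvd 1" by simp
  then show False unfolding two_pow_dvd_iff by (simp add: Rep_ops ok_one_def z2_of_int_app)
qed

lemma nd_iff: "\<not> pp dvd (x::'a::dpar okt) \<longleftrightarrow> pp dvd x - 1"
proof
  assume "\<not> pp dvd x" then show "pp dvd x - 1" using residue by blast
next
  assume a: "pp dvd x - 1"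
  show "\<not> pp dvd x"
  proof
    assume "pp dvd x"
    then have "pp dvd x - (x - 1)" using a by (rule dvd_diff)
    then show False using pp_not_dvd_1[where 'a='a] by simp
  qed
qed

lemma nd_D: "\<not> pp dvd (x::'a::dpar okt) \<Longrightarrow> pp dvd x - 1" using nd_iff by blast
lemma nd_I: "pp dvd (x::'a::dpar okt) - 1 \<Longrightarrow> \<not> pp dvd x" using nd_iff by blast

lemma nd_mult: "\<not> pp dvd (a::'a::dpar okt) \<Longrightarrow> \<not> pp dvd b \<Longrightarrow> \<not> pp dvd a * b"
proof -
  assume "\<not> pp dvd a" "\<not> pp dvd b"
  then have 1: "pp dvd a - 1" "pp dvd b - 1" by (simp_all add: nd_D)
  have eq: "a * b - 1 = (a - 1) * b + (b - 1)" by (simp add: algebra_simps)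
  have "pp dvd (a - 1) * b" using 1(1) by (rule dvd_mult2)
  then have "pp dvd (a - 1) * b + (b - 1)" using 1(2) by (rule dvd_add)
  then have "pp dvd a * b - 1" unfolding eq .
  then show ?thesis by (rule nd_I)
qed

lemma nd_power: "\<not> pp dvd (a::'a::dpar okt) \<Longrightarrow> \<not> pp dvd a ^ n"
  by (induction n) (simp_all add: pp_not_dvd_1 nd_mult)

lemma nd_unit: "(u::'a::dpar okt) * v = 1 \<Longrightarrow> \<not> pp dvd u"
proof
  assume u: "u * v = 1" "pp dvd u"
  have "pp dvd u * v" using u(2) by (rule dvd_mult2)
  then show False using u(1) pp_not_dvd_1[where 'a='a] by simp
qed

lemma nd_one: "\<not> (pp::'a::dpar okt) dvd 1" by (rule pp_not_dvd_1)

lemma pp_dvd_two_mult: "pp dvd 2 * (x::'a::dpar okt)"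
  using pp_dvd_2 by (rule dvd_mult2)

lemma nd_odd: "odd m \<Longrightarrow> \<not> (pp::'a::dpar okt) dvd of_nat m"
proof -
  assume "odd m"
  then obtain k where k: "m = 2 * k + 1" by (rule oddE)
  have "(of_nat m :: 'a okt) - 1 = 2 * of_nat k" unfolding k by simp
  then show ?thesis using pp_dvd_two_mult[of "of_nat k"] by (intro nd_I) simp
qed

lemma unit_of_nd: "\<not> pp dvd (u::'a::dpar okt) \<Longrightarrow> \<exists>v. u * v = 1"
proof -
  assume "\<not> pp dvd u"
  then have "pp dvd u - 1" by (rule nd_D)
  then obtain w where w: "u - 1 = pp * w" by (rule dvdE)
  have "1 - u = - (pp * w)" using w by (simp add: algebra_simps)
  then have "(1 - u) ^ 2 = pp ^ 2 * w ^ 2" by (simp add: power_mult_distrib)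
  also have "\<dots> = 2 * (eta * w ^ 2)" by (simp add: pp_sq_eta)
  finally have "(2::'a okt) dvd (1 - u) ^ 2" by simp
  moreover have "1 - u * (2 - u) = (1 - u) ^ 2" by (simp add: power2_eq_square algebra_simps)
  ultimately have "2 dvd 1 - u * (2 - u)" by simp
  then obtain v where "u * (2 - u) * v = 1" using inv2 by blast
  then have "u * ((2 - u) * v) = 1" by (simp add: mult.assoc)
  then show ?thesis by blast
qed

lemma krull_pi: "(\<And>r. pp ^ r dvd (x::'a::dpar okt)) \<Longrightarrow> x = 0"
proof -
  assume a: "\<And>r. pp ^ r dvd x"
  have "(2::'a okt) ^ n dvd x" for n using two_pow_dvd_pp[where 'a='a, of n] a[of "2 * n"] by (rule dvd_trans)
  then show ?thesis by (rule krull2)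
qed

lemma kill:
  assumes "pp ^ j dvd (S::'a::dpar okt)" "\<not> pp dvd U"
  shows "pp ^ Suc j dvd S \<or> pp ^ Suc j dvd S + pp ^ j * U"
proof -
  obtain s where s: "S = pp ^ j * s" using assms(1) by (rule dvdE)
  have U1: "pp dvd U - 1" using assms(2) by (rule nd_D)
  show ?thesis
  proof (cases "pp dvd s")
    case True
    then have "pp ^ j * pp dvd pp ^ j * s" by (rule mult_dvd_mono[OF dvd_refl])
    then have "pp ^ Suc j dvd S" unfolding s power_Suc2 .
    then show ?thesis by blast
  next
    case False
    then have "pp dvd s - 1" by (rule nd_D)
    then have "pp dvd (s - 1) + (U - 1) + 2" using U1 pp_dvd_2 by (intro dvd_add)
    moreover have "(s - 1) + (U - 1) + 2 = s + U" by (simp add: algebra_simps)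
    ultimately have "pp dvd s + U" by simp
    then have "pp ^ j * pp dvd pp ^ j * (s + U)" by (rule mult_dvd_mono[OF dvd_refl])
    moreover have "pp ^ j * (s + U) = S + pp ^ j * U" unfolding s by (simp add: distrib_left)
    ultimately have "pp ^ Suc j dvd S + pp ^ j * U" unfolding power_Suc2 by simp
    then show ?thesis by blast
  qed
qed

lemma sum2:
  assumes "\<not> pp dvd (U1::'a::dpar okt)" "\<not> pp dvd U2"
  shows "pp ^ Suc j dvd pp ^ j * U1 + pp ^ j * U2"
proof -
  have "pp dvd (U1 - 1) + (U2 - 1) + 2" using nd_D[OF assms(1)] nd_D[OF assms(2)] pp_dvd_2 by (intro dvd_add)
  moreover have "(U1 - 1) + (U2 - 1) + 2 = U1 + U2" by (simp add: algebra_simps)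
  ultimately have "pp dvd U1 + U2" by simp
  then have "pp ^ j * pp dvd pp ^ j * (U1 + U2)" by (rule mult_dvd_mono[OF dvd_refl])
  then show ?thesis unfolding power_Suc2 distrib_left .
qed

lemma two_eq: "\<exists>i. (2::'a::dpar okt) = pp ^ 2 * i \<and> \<not> pp dvd i"
proof -
  obtain v where v: "(eta::'a okt) * v = 1" using eta_unit by blast
  have "(2::'a okt) = pp ^ 2 * v" by (simp add: pp_sq_eta mult.assoc v)
  moreover have "\<not> pp dvd v" using v nd_unit[of v eta] by (simp add: mult.commute)
  ultimately show ?thesis by blast
qed

lemma tau:
  assumes "odd m"
  shows "\<exists>U. (1 + pp) ^ (2 * m) - 1 = (pp::'a::dpar okt) ^ 2 * U \<and> \<not> pp dvd U"
proof -
  obtain i where i: "(2::'a okt) = pp ^ 2 * i" "\<not> pp dvd i" using two_eq by blast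
  define V where "V = 1 + i * pp"
  have x: "(1 + pp) ^ 2 = 1 + pp ^ 2 * V"
  proof -
    have "(1 + pp) ^ 2 = 1 + 2 * pp + pp ^ 2" by (simp add: power2_eq_square algebra_simps)
    also have "\<dots> = 1 + pp ^ 2 * V" unfolding V_def i(1) by (simp add: algebra_simps)
    finally show ?thesis .
  qed
  have Vnd: "\<not> pp dvd V" by (rule nd_I) (simp add: V_def)
  define X where "X = (1 + (pp::'a okt)) ^ 2"
  define Sm where "Sm = (\<Sum>j<m. X ^ j)"
  have "X ^ m - 1 = (X - 1) * Sm" unfolding Sm_def by (rule power_diff_1_eq)
  moreover have "(1 + pp) ^ (2 * m) = X ^ m" unfolding X_def by (simp add: power_mult)
  ultimately have eq: "(1 + pp) ^ (2 * m) - 1 = pp ^ 2 * (V * Sm)" unfolding x X_def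
    by (simp add: mult.assoc)
  have "pp dvd Sm - of_nat m"
  proof -
    have "Sm - of_nat m = (\<Sum>j<m. X ^ j - 1)" unfolding Sm_def by (simp add: sum_subtractf)
    moreover have "pp dvd X ^ j - 1" for j
    proof -
      have "X - 1 dvd X ^ j - 1 ^ j" by (rule dvd_pow_diff)
      moreover have "pp dvd X - 1" unfolding X_def x by (simp add: power2_eq_square)
      ultimately show ?thesis by (simp add: dvd_trans)
    qed
    ultimately show ?thesis by (simp add: dvd_sum)
  qed
  moreover have "pp dvd of_nat m - 1" using nd_odd[OF assms] by (rule nd_D)
  ultimately have "pp dvd (Sm - of_nat m) + (of_nat m - 1)" by (rule dvd_add)
  then have "\<not> pp dvd Sm" by (intro nd_I) simp
  then have "\<not> pp dvd V * Sm" using Vnd nd_mult by blast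
  then show ?thesis using eq by blast
qed

lemma binexp: "\<exists>Q. (t + h) ^ Suc n = t ^ Suc n + of_nat (Suc n) * t ^ n * h + h ^ 2 * (Q::'a::dpar okt)"
proof (induction n)
  case 0 then show ?case by (intro exI[of _ 0]) simp
next
  case (Suc n)
  then obtain Q where Q: "(t + h) ^ Suc n = t ^ Suc n + of_nat (Suc n) * t ^ n * h + h ^ 2 * Q" by blast
  have "(t + h) ^ Suc (Suc n) = (t + h) * (t ^ Suc n + of_nat (Suc n) * t ^ n * h + h ^ 2 * Q)"
    using Q by simp
  also have "\<dots> = t ^ Suc (Suc n) + of_nat (Suc (Suc n)) * t ^ Suc n * h
     + h ^ 2 * (t * Q + of_nat (Suc n) * t ^ n + h * Q)"
    by (simp add: algebra_simps power2_eq_square)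
  finally show ?case by blast
qed

lemma hensel_step:
  fixes u t R :: "'a::dpar okt"
  assumes N: "5 \<le> N" and m: "odd m" and u: "\<not> pp dvd u" and t: "\<not> pp dvd t"
    and g: "pp ^ N dvd u * t ^ (2 * m) + R"
  shows "\<exists>t'. \<not> pp dvd t' \<and> pp ^ Suc N dvd u * t' ^ (2 * m) + R \<and> pp ^ (N - 2) dvd t' - t"
proof -
  obtain e where e: "u * t ^ (2 * m) + R = pp ^ N * e" using g by (rule dvdE)
  obtain i where i: "(2::'a okt) = pp ^ 2 * i" "\<not> pp dvd i" using two_eq by blast
  define h where "h = (pp::'a okt) ^ (N - 2)"
  have m1: "Suc (2 * m - 1) = 2 * m" using m by (cases m) auto
  obtain Q where Q: "(t + h) ^ Suc (2 * m - 1) = t ^ Suc (2 * m - 1) + of_nat (Suc (2 * m - 1)) * t ^ (2 * m - 1) * h + h ^ 2 * Q"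
    using binexp by blast
  then have Q': "(t + h) ^ (2 * m) = t ^ (2 * m) + of_nat (2 * m) * t ^ (2 * m - 1) * h + h ^ 2 * Q"
    unfolding m1 .
  define U where "U = u * i * of_nat m * t ^ (2 * m - 1)"
  have Und: "\<not> pp dvd U" unfolding U_def using u i(2) nd_odd[OF m] nd_power[OF t]
    by (intro nd_mult)
  have hN: "pp ^ N = pp ^ 2 * h"
  proof -
    have n2: "2 + (N - 2) = N" using N by arith
    have "pp ^ (2 + (N - 2)) = (pp::'a okt) ^ 2 * h" unfolding h_def by (rule power_add)
    then show ?thesis unfolding n2 .
  qed
  have h2: "h ^ 2 = pp ^ (2 * N - 4)" unfolding h_def by (simp add: power_mult[symmetric] algebra_simps)
  have on: "(of_nat (2 * m) :: 'a okt) = 2 * of_nat m" by simp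
  have key: "u * (t + h) ^ (2 * m) + R = pp ^ N * e + pp ^ N * U + h ^ 2 * (u * Q)"
  proof -
    have "u * (t + h) ^ (2 * m) + R = (u * t ^ (2 * m) + R) + u * (of_nat (2 * m) * t ^ (2 * m - 1) * h) + h ^ 2 * (u * Q)"
      unfolding Q' by (simp add: algebra_simps)
    also have "u * (of_nat (2 * m) * t ^ (2 * m - 1) * h) = pp ^ N * U"
      unfolding on i(1) hN U_def by (simp add: algebra_simps)
    finally show ?thesis unfolding e .
  qed
  have "pp ^ N dvd pp ^ N * e" by simp
  then have "pp ^ Suc N dvd pp ^ N * e \<or> pp ^ Suc N dvd pp ^ N * e + pp ^ N * U"
    using Und by (rule kill)
  then show ?thesis
  proof
    assume "pp ^ Suc N dvd pp ^ N * e"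
    then show ?thesis using t e by (intro exI[of _ t]) simp
  next
    assume a: "pp ^ Suc N dvd pp ^ N * e + pp ^ N * U"
    have "pp ^ Suc N dvd h ^ 2"
      unfolding h2 using N by (intro le_imp_power_dvd) simp
    then have "pp ^ Suc N dvd h ^ 2 * (u * Q)" by (rule dvd_mult2)
    with a have "pp ^ Suc N dvd u * (t + h) ^ (2 * m) + R" unfolding key by (rule dvd_add)
    moreover have "\<not> pp dvd t + h"
    proof (rule nd_I)
      have "pp dvd h" unfolding h_def using N by (simp add: dvd_power)
      moreover have "pp dvd t - 1" using t by (rule nd_D)
      ultimately have "pp dvd (t - 1) + h" by (simp add: dvd_add)
      then show "pp dvd t + h - 1" by (simp add: algebra_simps)
    qed
    moreover have "pp ^ (N - 2) dvd (t + h) - t" by (simp add: h_def)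
    ultimately show ?thesis by blast
  qed
qed

lemma hensel:
  fixes u t0 R :: "'a::dpar okt"
  assumes m: "odd m" and u: "\<not> pp dvd u" and t0: "\<not> pp dvd t0"
    and g: "pp ^ 5 dvd u * t0 ^ (2 * m) + R"
  shows "\<exists>t. u * t ^ (2 * m) + R = 0"
proof -
  define G where "G = (\<lambda>t::'a okt. u * t ^ (2 * m) + R)"
  define P where "P = (\<lambda>N t (t'::'a okt). \<not> pp dvd t' \<and> pp ^ Suc N dvd G t' \<and> pp ^ (N - 2) dvd t' - t)"
  define T where "T = rec_nat t0 (\<lambda>j t. SOME t'. P (j + 5) t t')"
  have T0: "T 0 = t0" by (simp add: T_def)
  have TS: "T (Suc j) = (SOME t'. P (j + 5) (T j) t')" for j by (simp add: T_def)
  have inv: "\<not> pp dvd T j \<and> pp ^ (j + 5) dvd G (T j)" for j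
  proof (induction j)
    case 0 then show ?case using t0 g by (simp add: T0 G_def)
  next
    case (Suc j)
    have "\<exists>t'. P (j + 5) (T j) t'" unfolding P_def G_def
      using hensel_step[of "j + 5" m u "T j" R] Suc m u by (simp add: G_def)
    then have "P (j + 5) (T j) (T (Suc j))" unfolding TS by (rule someI_ex)
    then show ?case unfolding P_def by simp
  qed
  have diff: "pp ^ (j + 3) dvd T (Suc j) - T j" for j
  proof -
    have "\<exists>t'. P (j + 5) (T j) t'" unfolding P_def G_def
      using hensel_step[of "j + 5" m u "T j" R] inv[of j] m u by (simp add: G_def)
    then have "P (j + 5) (T j) (T (Suc j))" unfolding TS by (rule someI_ex)
    then have "pp ^ (j + 5 - 2) dvd T (Suc j) - T j" unfolding P_def by blast
    moreover have "j + 5 - 2 = j + 3" by simp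
    ultimately show ?thesis by simp
  qed
  define s where "s = (\<lambda>n. T (2 * n))"
  have "2 ^ n dvd s (Suc n) - s n" for n
  proof -
    have eq: "s (Suc n) - s n = (T (Suc (Suc (2 * n))) - T (Suc (2 * n))) + (T (Suc (2 * n)) - T (2 * n))"
      by (simp add: s_def)
    have d1: "pp ^ (2 * n) dvd T (Suc (Suc (2 * n))) - T (Suc (2 * n))"
      using diff[of "Suc (2 * n)"] le_imp_power_dvd[of "2 * n" "Suc (2 * n) + 3" pp] dvd_trans by auto
    have d2: "pp ^ (2 * n) dvd T (Suc (2 * n)) - T (2 * n)"
      using diff[of "2 * n"] le_imp_power_dvd[of "2 * n" "2 * n + 3" pp] dvd_trans by auto
    have "pp ^ (2 * n) dvd (T (Suc (Suc (2 * n))) - T (Suc (2 * n))) + (T (Suc (2 * n)) - T (2 * n))"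
      using d1 d2 by (rule dvd_add)
    then have "pp ^ (2 * n) dvd s (Suc n) - s n" unfolding eq .
    then show ?thesis using two_pow_dvd_pp dvd_trans by blast
  qed
  then obtain L where L: "\<And>n. 2 ^ n dvd L - s n" using limit2 by blast
  have "2 ^ n dvd G L" for n
  proof -
    have "G L = G (s n) + u * (L ^ (2 * m) - s n ^ (2 * m))" by (simp add: G_def algebra_simps)
    moreover have "2 ^ n dvd u * (L ^ (2 * m) - s n ^ (2 * m))"
    proof -
      have "2 ^ n dvd L ^ (2 * m) - s n ^ (2 * m)" using L[of n] dvd_pow_diff[of L "s n" "2 * m"] by (rule dvd_trans)
      then show ?thesis by (rule dvd_mult)
    qed
    moreover have "2 ^ n dvd G (s n)"
    proof -
      have "pp ^ (2 * n) dvd G (s n)"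
        using inv[of "2 * n"] le_imp_power_dvd[of "2 * n" "2 * n + 5" pp] dvd_trans by (auto simp: s_def)
      then show ?thesis using two_pow_dvd_pp dvd_trans by blast
    qed
    ultimately show ?thesis by simp
  qed
  then have "G L = 0" by (rule krull2)
  then show ?thesis unfolding G_def by blast
qed

lemma val_exists:
  fixes x :: "'a::dpar okt"
  assumes "x \<noteq> 0"
  shows "\<exists>r u. x = pp ^ r * u \<and> \<not> pp dvd u"
proof -
  have ex: "\<exists>r. \<not> pp ^ Suc r dvd x"
  proof (rule ccontr)
    assume "\<not> (\<exists>r. \<not> pp ^ Suc r dvd x)"
    then have "pp ^ r dvd x" for r by (cases r) auto
    then have "x = 0" by (rule krull_pi)
    then show False using assms by simp
  qed
  define r where "r = (LEAST r. \<not> pp ^ Suc r dvd x)"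
  have r1: "\<not> pp ^ Suc r dvd x" unfolding r_def using ex by (rule LeastI_ex)
  have r2: "pp ^ r dvd x"
  proof (cases r)
    case 0 then show ?thesis by simp
  next
    case (Suc r')
    then have "r' < r" by simp
    then have "\<not> \<not> pp ^ Suc r' dvd x" unfolding r_def by (rule not_less_Least)
    then show ?thesis using Suc by simp
  qed
  obtain u where u: "x = pp ^ r * u" using r2 by (rule dvdE)
  have "\<not> pp dvd u"
  proof
    assume "pp dvd u"
    then have "pp ^ r * pp dvd pp ^ r * u" by (rule mult_dvd_mono[OF dvd_refl])
    then show False using r1 u by (simp add: mult.commute)
  qed
  then show ?thesis using u by blast
qed

lemma pow01: "\<xi> \<in> {0, 1} \<Longrightarrow> 0 < d \<Longrightarrow> (\<xi>::'a::comm_ring_1) ^ d = \<xi>"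
  by (auto simp: zero_power)

lemma kill01:
  fixes S U :: "'a::dpar okt"
  assumes "pp ^ j dvd S" "\<not> pp dvd U" "0 < d"
  shows "\<exists>\<xi>\<in>{0,1}. pp ^ Suc j dvd S + pp ^ j * U * \<xi> ^ d"
proof -
  from kill[OF assms(1,2)] show ?thesis
  proof
    assume "pp ^ Suc j dvd S"
    then show ?thesis using assms(3) by (intro bexI[of _ 0]) (auto simp: zero_power)
  next
    assume "pp ^ Suc j dvd S + pp ^ j * U"
    then show ?thesis by (intro bexI[of _ 1]) auto
  qed
qed

lemma core2:
  fixes uA uB uC uE :: "'a::dpar okt"
  assumes m: "odd m" and nd: "\<not> pp dvd uA" "\<not> pp dvd uB" "\<not> pp dvd uC" "\<not> pp dvd uE"
    and AB: "pp ^ 2 dvd uA + uB"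
  shows "\<exists>tA \<xi>C \<xi>E. uA * tA ^ (2 * m) + uB + pp ^ 3 * uC * \<xi>C ^ (2 * m) + pp ^ 4 * uE * \<xi>E ^ (2 * m) = 0"
proof -
  have d0: "0 < 2 * m" using m by (cases m) auto
  obtain U0 where U0: "(1 + pp) ^ (2 * m) - 1 = (pp::'a okt) ^ 2 * U0" "\<not> pp dvd U0" using tau[OF m] by blast
  have "pp ^ 3 dvd uA + uB \<or> pp ^ 3 dvd (uA + uB) + pp ^ 2 * (uA * U0)"
    using kill[OF AB nd_mult[OF nd(1) U0(2)]] by (simp add: numeral_3_eq_3)
  then obtain t0 where t0: "\<not> pp dvd t0" "pp ^ 3 dvd uA * t0 ^ (2 * m) + uB"
  proof
    assume "pp ^ 3 dvd uA + uB"
    then show ?thesis using that[of 1] nd_one by simp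
  next
    assume a: "pp ^ 3 dvd (uA + uB) + pp ^ 2 * (uA * U0)"
    have eq: "uA * (1 + pp) ^ (2 * m) + uB = (uA + uB) + pp ^ 2 * (uA * U0)"
    proof -
      have "(1 + pp) ^ (2 * m) = 1 + (pp::'a okt) ^ 2 * U0" using U0(1) by (simp add: algebra_simps)
      then show ?thesis by (simp add: algebra_simps)
    qed
    have n1: "\<not> pp dvd (1 + (pp::'a okt))" by (rule nd_I) simp
    have "pp ^ 3 dvd uA * (1 + pp) ^ (2 * m) + uB" unfolding eq by (rule a)
    then show ?thesis by (rule that[OF n1])
  qed
  obtain \<xi>C where \<xi>C: "pp ^ Suc 3 dvd (uA * t0 ^ (2 * m) + uB) + pp ^ 3 * uC * \<xi>C ^ (2 * m)"
    using kill01[OF t0(2) nd(3) d0] by blast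
  obtain \<xi>E where \<xi>E: "pp ^ Suc (Suc 3) dvd ((uA * t0 ^ (2 * m) + uB) + pp ^ 3 * uC * \<xi>C ^ (2 * m)) + pp ^ Suc 3 * uE * \<xi>E ^ (2 * m)"
    using kill01[OF \<xi>C nd(4) d0] by blast
  have e5: "Suc (Suc 3) = 5" "Suc 3 = 4" by simp_all
  have "pp ^ 5 dvd uA * t0 ^ (2 * m) + (uB + pp ^ 3 * uC * \<xi>C ^ (2 * m) + pp ^ 4 * uE * \<xi>E ^ (2 * m))"
    using \<xi>E unfolding e5 by (simp add: add.assoc)
  from hensel[OF m nd(1) t0(1) this] obtain tA where
    "uA * tA ^ (2 * m) + (uB + pp ^ 3 * uC * \<xi>C ^ (2 * m) + pp ^ 4 * uE * \<xi>E ^ (2 * m)) = 0" by blast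
  then show ?thesis by (auto simp: add.assoc)
qed

lemma core1:
  fixes uA uB uC uE :: "'a::dpar okt"
  assumes m: "odd m" and nd: "\<not> pp dvd uA" "\<not> pp dvd uB" "\<not> pp dvd uC" "\<not> pp dvd uE"
    and AB: "pp ^ 2 dvd uA + uB"
  shows "\<exists>tA \<xi>C \<xi>E. uA * tA ^ (2 * m) + uB + pp ^ 2 * uC * \<xi>C ^ (2 * m) + pp ^ 3 * uE * \<xi>E ^ (2 * m) = 0"
proof -
  have d0: "0 < 2 * m" using m by (cases m) auto
  obtain U0 where U0: "(1 + pp) ^ (2 * m) - 1 = (pp::'a okt) ^ 2 * U0" "\<not> pp dvd U0" using tau[OF m] by blast
  have tp: "(1 + pp) ^ (2 * m) = 1 + (pp::'a okt) ^ 2 * U0" using U0(1) by (simp add: algebra_simps)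
  have nd1p: "\<not> pp dvd (1 + (pp::'a okt))" by (rule nd_I) simp
  have "pp ^ 3 dvd uA + uB \<or> pp ^ 3 dvd (uA + uB) + pp ^ 2 * uC"
    using kill[OF AB nd(3)] by (simp add: numeral_3_eq_3)
  then obtain t0 where t0: "\<not> pp dvd t0" "pp ^ 3 dvd uA * t0 ^ (2 * m) + uB + pp ^ 2 * uC"
  proof
    assume "pp ^ 3 dvd (uA + uB) + pp ^ 2 * uC"
    then show ?thesis using that[of 1] nd_one by (simp add: add.assoc)
  next
    assume a: "pp ^ 3 dvd uA + uB"
    have "pp ^ Suc 2 dvd pp ^ 2 * (uA * U0) + pp ^ 2 * uC"
      by (rule sum2) (simp_all add: nd_mult nd U0)
    then have s3: "pp ^ 3 dvd (uA + uB) + (pp ^ 2 * (uA * U0) + pp ^ 2 * uC)"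
      using a by (simp add: numeral_3_eq_3 dvd_add)
    have eq: "uA * (1 + pp) ^ (2 * m) + uB + pp ^ 2 * uC = (uA + uB) + (pp ^ 2 * (uA * U0) + pp ^ 2 * uC)"
      unfolding tp by (simp add: algebra_simps)
    have "pp ^ 3 dvd uA * (1 + pp) ^ (2 * m) + uB + pp ^ 2 * uC" unfolding eq by (rule s3)
    then show ?thesis by (rule that[OF nd1p])
  qed
  obtain \<xi>E where \<xi>E0: "pp ^ Suc 3 dvd (uA * t0 ^ (2 * m) + uB + pp ^ 2 * uC) + pp ^ 3 * uE * \<xi>E ^ (2 * m)"
    using kill01[OF t0(2) nd(4) d0] by blast
  have e4: "Suc 3 = 4" by simp
  have \<xi>E: "pp ^ 4 dvd (uA * t0 ^ (2 * m) + uB + pp ^ 2 * uC) + pp ^ 3 * uE * \<xi>E ^ (2 * m)"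
    using \<xi>E0 unfolding e4 .
  have "\<exists>\<xi>C\<in>{1, 1 + pp}. pp ^ 5 dvd uA * t0 ^ (2 * m) + uB + pp ^ 2 * uC * \<xi>C ^ (2 * m) + pp ^ 3 * uE * \<xi>E ^ (2 * m)"
  proof -
    have "pp ^ Suc 4 dvd (uA * t0 ^ (2 * m) + uB + pp ^ 2 * uC) + pp ^ 3 * uE * \<xi>E ^ (2 * m)
       \<or> pp ^ Suc 4 dvd (uA * t0 ^ (2 * m) + uB + pp ^ 2 * uC) + pp ^ 3 * uE * \<xi>E ^ (2 * m) + pp ^ 4 * (uC * U0)"
      using kill[OF \<xi>E nd_mult[OF nd(3) U0(2)]] .
    then show ?thesis
    proof
      assume "pp ^ Suc 4 dvd (uA * t0 ^ (2 * m) + uB + pp ^ 2 * uC) + pp ^ 3 * uE * \<xi>E ^ (2 * m)"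
      then show ?thesis by (intro bexI[of _ 1]) (simp_all add: numeral_eq_Suc add.assoc)
    next
      assume a: "pp ^ Suc 4 dvd (uA * t0 ^ (2 * m) + uB + pp ^ 2 * uC) + pp ^ 3 * uE * \<xi>E ^ (2 * m) + pp ^ 4 * (uC * U0)"
      have eq: "(uA * t0 ^ (2 * m) + uB + pp ^ 2 * uC) + pp ^ 3 * uE * \<xi>E ^ (2 * m) + pp ^ 4 * (uC * U0)
         = uA * t0 ^ (2 * m) + uB + pp ^ 2 * uC * (1 + pp) ^ (2 * m) + pp ^ 3 * uE * \<xi>E ^ (2 * m)"
        unfolding tp by (simp add: algebra_simps numeral_eq_Suc)
      have e5: "Suc 4 = 5" by simp
      from a have "pp ^ 5 dvd uA * t0 ^ (2 * m) + uB + pp ^ 2 * uC * (1 + pp) ^ (2 * m) + pp ^ 3 * uE * \<xi>E ^ (2 * m)"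
        unfolding eq e5 .
      then show ?thesis by (intro bexI[of _ "1 + pp"]) simp_all
    qed
  qed
  then obtain \<xi>C where "pp ^ 5 dvd uA * t0 ^ (2 * m) + uB + pp ^ 2 * uC * \<xi>C ^ (2 * m) + pp ^ 3 * uE * \<xi>E ^ (2 * m)"
    by blast
  then have "pp ^ 5 dvd uA * t0 ^ (2 * m) + (uB + pp ^ 2 * uC * \<xi>C ^ (2 * m) + pp ^ 3 * uE * \<xi>E ^ (2 * m))"
    by (simp add: add.assoc)
  from hensel[OF m nd(1) t0(1) this] obtain tA where
    "uA * tA ^ (2 * m) + (uB + pp ^ 2 * uC * \<xi>C ^ (2 * m) + pp ^ 3 * uE * \<xi>E ^ (2 * m)) = 0" by blast
  then show ?thesis by (auto simp: add.assoc)
qed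

lemma Rep_pow: "Rep (x ^ k :: 'a::dpar okt) = ok_pow (DD TYPE('a)) (Rep x) k"
proof (induction k)
  case 0 then show ?case by (simp add: Rep_ops)
next
  case (Suc k)
  have "x ^ Suc k = x ^ k * x" by (rule power_Suc2)
  then show ?case using Suc by (simp only: Rep_ops ok_pow.simps)
qed

lemma ok_sum_cong: "(\<And>i. i < s \<Longrightarrow> g i = g' i) \<Longrightarrow> ok_sum g s = ok_sum g' s"
  by (induction s) auto

lemma Rep_sum: "ok_sum (\<lambda>i. Rep (f i :: 'a::dpar okt)) s = Rep (\<Sum>i<s. f i)"
  by (induction s) (simp_all add: Rep_ops)

lemma Rep_Abs: "u \<in> O_set \<Longrightarrow> Rep (Abs u :: 'a::dpar okt) = u"
  by (rule Abs_inverse)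

lemma Rep_eq_iff: "Rep x = Rep y \<longleftrightarrow> x = (y::'a::dpar okt)"
  by (rule Rep_inject)

lemma ok_unit_iff:
  "ok_unit (DD TYPE('a::dpar)) u \<longleftrightarrow> u \<in> O_set \<and> (\<exists>V. (Abs u :: 'a okt) * V = 1)"
proof
  assume "ok_unit (DD TYPE('a)) u"
  then obtain v where u: "u \<in> O_set" and v: "v \<in> O_set" "ok_mul (DD TYPE('a)) u v = ok_one"
    unfolding ok_unit_def by blast
  have "Rep ((Abs u :: 'a okt) * Abs v) = Rep (1::'a okt)"
    using v u by (simp add: Rep_ops Rep_Abs)
  then show "u \<in> O_set \<and> (\<exists>V. (Abs u :: 'a okt) * V = 1)" using u Rep_eq_iff by blast
next
  assume a: "u \<in> O_set \<and> (\<exists>V. (Abs u :: 'a okt) * V = 1)"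
  then obtain V where V: "(Abs u :: 'a okt) * V = 1" by blast
  have "ok_mul (DD TYPE('a)) u (Rep V) = ok_one"
    using arg_cong[OF V, of Rep] a by (simp add: Rep_ops Rep_Abs)
  then show "ok_unit (DD TYPE('a)) u" unfolding ok_unit_def using a Rep_in by blast
qed

lemma decomp:
  assumes a: "a \<in> O_set" "a \<noteq> ok_zero"
  shows "\<exists>U. (Abs a :: 'a::dpar okt) = pp ^ ok_ord (DD TYPE('a)) a * U \<and> \<not> pp dvd U
           \<and> ok_unitpart (DD TYPE('a)) a = Rep U"
proof -
  let ?D = "DD TYPE('a)"
  have "(Abs a :: 'a okt) \<noteq> 0"
  proof
    assume "(Abs a :: 'a okt) = 0"
    then have "Rep (Abs a :: 'a okt) = Rep (0::'a okt)" by simp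
    then show False using a by (simp add: Rep_Abs Rep_ops)
  qed
  then obtain r U' where rU: "(Abs a :: 'a okt) = pp ^ r * U'" "\<not> pp dvd U'" using val_exists by blast
  obtain V where V: "U' * V = 1" using unit_of_nd[OF rU(2)] by blast
  have ex: "\<exists>r u. ok_unit ?D u \<and> a = ok_mul ?D (ok_pow ?D ok_pi r) u"
  proof (intro exI conjI)
    show "ok_unit ?D (Rep U')" unfolding ok_unit_iff Rep_inverse using V Rep_in by blast
    have "a = Rep (Abs a :: 'a okt)" using a by (simp add: Rep_Abs)
    also have "\<dots> = ok_mul ?D (ok_pow ?D ok_pi r) (Rep U')" unfolding rU(1) by (simp add: Rep_ops Rep_pow Rep_pp)
    finally show "a = ok_mul ?D (ok_pow ?D ok_pi r) (Rep U')" .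
  qed
  have "\<exists>u. ok_unit ?D u \<and> a = ok_mul ?D (ok_pow ?D ok_pi (ok_ord ?D a)) u"
    unfolding ok_ord_def using ex by (rule LeastI_ex)
  then have up: "ok_unit ?D (ok_unitpart ?D a) \<and> a = ok_mul ?D (ok_pow ?D ok_pi (ok_ord ?D a)) (ok_unitpart ?D a)"
    unfolding ok_unitpart_def by (rule someI_ex)
  define up where "up = ok_unitpart ?D a"
  have upO: "up \<in> O_set" and upV: "\<exists>W. (Abs up :: 'a okt) * W = 1" using up ok_unit_iff up_def by blast+
  have "Rep (pp ^ ok_ord ?D a * (Abs up :: 'a okt)) = a"
    using up upO by (simp add: Rep_ops Rep_pow Rep_pp Rep_Abs up_def)
  then have "(Abs a :: 'a okt) = pp ^ ok_ord ?D a * Abs up"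
    by (metis Rep_inverse)
  moreover have "\<not> pp dvd (Abs up :: 'a okt)" using upV nd_unit by blast
  moreover have "ok_unitpart ?D a = Rep (Abs up :: 'a okt)" using upO by (simp add: Rep_Abs up_def)
  ultimately show ?thesis by blast
qed

lemma two_cancel:
  assumes "2 * y = (0::'a::dpar okt)"
  shows "y = 0"
proof (rule eq_via_Rep[OF Rep_in Rep_in])
  fix n
  have y2: "(of_int 2 * y :: 'a okt) = 0" using assms by simp
  have z1: "(2 * fst (Rep y) (Suc n)) mod 2 ^ Suc n = 0"
    using lev_of_int_mul(1)[of 2 y "Suc n"] unfolding y2 by (simp add: Rep_ops ok_zero_def z2_of_int_app)
  have z2: "(2 * snd (Rep y) (Suc n)) mod 2 ^ Suc n = 0"
    using lev_of_int_mul(2)[of 2 y "Suc n"] unfolding y2 by (simp add: Rep_ops ok_zero_def z2_of_int_app)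
  have lem: "h \<in> Z2 \<Longrightarrow> (2 * h (Suc n)) mod 2 ^ Suc n = 0 \<Longrightarrow> h n mod 2 ^ n = 0" for h
  proof -
    assume hZ: "h \<in> Z2" and hm: "(2 * h (Suc n)) mod 2 ^ Suc n = 0"
    then have "2 * 2 ^ n dvd 2 * h (Suc n)" by (simp add: dvd_eq_mod_eq_0)
    then have "2 ^ n dvd h (Suc n)" by (simp add: mult_dvd_mono)
    then show ?thesis using Z2_coh[OF hZ, of n] Z2_mod[OF hZ, of n] by (simp add: dvd_eq_mod_eq_0)
  qed
  show "fst (Rep y) n mod 2 ^ n = fst (Rep (0::'a okt)) n mod 2 ^ n"
    using lem[OF Rep_Z2(1) z1] by (simp add: Rep_ops ok_zero_def z2_of_int_app)
  show "snd (Rep y) n mod 2 ^ n = snd (Rep (0::'a okt)) n mod 2 ^ n"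
    using lem[OF Rep_Z2(2) z2] by (simp add: Rep_ops ok_zero_def z2_of_int_app)
qed

lemma pp_cancel:
  assumes "pp * x = (0::'a::dpar okt)"
  shows "x = 0"
proof -
  obtain v where v: "(eta::'a okt) * v = 1" using eta_unit by blast
  have "pp ^ 2 * x = 0" using assms by (simp add: power2_eq_square mult.assoc)
  then have "2 * (eta * x) = 0" by (simp add: pp_sq_eta mult.assoc)
  then have "eta * x = 0" by (rule two_cancel)
  then have "v * (eta * x) = 0" by simp
  then show ?thesis using v by (simp add: mult.assoc[symmetric] mult.commute)
qed

lemma pp_pow_nz: "(pp::'a::dpar okt) ^ e \<noteq> 0"
proof (induction e)
  case 0 then show ?case by simp
next
  case (Suc e)
  then show ?case using pp_cancel by auto
qed

definition pcond :: "'a::dpar okt \<Rightarrow> nat \<Rightarrow> bool" where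
  "pcond U c \<longleftrightarrow> c \<in> {0, 1} \<and> (\<exists>W. U = 1 + of_nat c * pp + pp ^ 2 * W)"

lemma pcond_iff:
  "(c \<in> {0, 1} \<and> (\<exists>w\<in>O_set. Rep U = ok_add (ok_add ok_one (ok_mul (DD TYPE('a)) (z2_of_int (int c), z2_of_int 0) ok_pi))
                             (ok_mul (DD TYPE('a)) (ok_pow (DD TYPE('a)) ok_pi 2) w))) \<longleftrightarrow> pcond (U::'a::dpar okt) c"
proof -
  have r: "Rep (1 + of_nat c * pp + pp ^ 2 * W :: 'a okt) = ok_add (ok_add ok_one (ok_mul (DD TYPE('a)) (z2_of_int (int c), z2_of_int 0) ok_pi))
                             (ok_mul (DD TYPE('a)) (ok_pow (DD TYPE('a)) ok_pi 2) (Rep W))" for W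
  proof -
    have "(of_nat c :: 'a okt) = of_int (int c)" by simp
    then have "Rep (of_nat c :: 'a okt) = (z2_of_int (int c), z2_of_int 0)" by (simp only: Rep_of_int)
    then show ?thesis by (simp add: Rep_ops Rep_pow Rep_pp)
  qed
  show ?thesis
  proof
    assume "c \<in> {0, 1} \<and> (\<exists>w\<in>O_set. Rep U = ok_add (ok_add ok_one (ok_mul (DD TYPE('a)) (z2_of_int (int c), z2_of_int 0) ok_pi))
                             (ok_mul (DD TYPE('a)) (ok_pow (DD TYPE('a)) ok_pi 2) w))"
    then obtain w where c: "c \<in> {0, 1}" and w: "w \<in> O_set" and e: "Rep U = ok_add (ok_add ok_one (ok_mul (DD TYPE('a)) (z2_of_int (int c), z2_of_int 0) ok_pi))
                             (ok_mul (DD TYPE('a)) (ok_pow (DD TYPE('a)) ok_pi 2) w)" by blast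
    have "Rep U = Rep (1 + of_nat c * pp + pp ^ 2 * Abs w :: 'a okt)" unfolding r using e w by (simp add: Rep_Abs)
    then show "pcond U c" unfolding pcond_def Rep_eq_iff using c by blast
  next
    assume "pcond U c"
    then obtain W where c: "c \<in> {0, 1}" and W: "U = 1 + of_nat c * pp + pp ^ 2 * W" unfolding pcond_def by blast
    show "c \<in> {0, 1} \<and> (\<exists>w\<in>O_set. Rep U = ok_add (ok_add ok_one (ok_mul (DD TYPE('a)) (z2_of_int (int c), z2_of_int 0) ok_pi))
                             (ok_mul (DD TYPE('a)) (ok_pow (DD TYPE('a)) ok_pi 2) w))"
      using c W r[of W] Rep_in[of W] by blast
  qed
qed

lemma pcond_ex1:
  assumes "\<not> pp dvd (U::'a::dpar okt)"
  shows "\<exists>!c. pcond U c"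
proof -
  have ex: "\<exists>c. pcond U c"
  proof -
    obtain y where y: "U - 1 = pp * y" using nd_D[OF assms] by (rule dvdE)
    show ?thesis
    proof (cases "pp dvd y")
      case True
      then obtain W where "y = pp * W" by (rule dvdE)
      then have "U = 1 + of_nat 0 * pp + pp ^ 2 * W" using y by (simp add: algebra_simps power2_eq_square)
      then show ?thesis unfolding pcond_def by blast
    next
      case False
      then obtain W where "y - 1 = pp * W" using nd_D by (blast elim: dvdE)
      then have "U = 1 + of_nat 1 * pp + pp ^ 2 * W" using y by (simp add: algebra_simps power2_eq_square)
      then show ?thesis unfolding pcond_def by blast
    qed
  qed
  have uniq: "c = c'" if p12: "pcond U c" "pcond U c'" for c c'
  proof (rule ccontr)
    assume ne: "c \<noteq> c'"
    obtain W W' where c: "c \<in> {0,1}" "c' \<in> {0,1}" and W: "U = 1 + of_nat c * pp + pp ^ 2 * W" "U = 1 + of_nat c' * pp + pp ^ 2 * W'"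
      using p12 unfolding pcond_def by blast
    have "\<exists>Z. pp * (pp * Z - 1) = (0::'a okt)"
    proof (cases "c = 0")
      case True
      then have "c' = 1" using c ne by auto
      then have "pp * (pp * (W - W') - 1) = 0" using W True by (simp add: algebra_simps power2_eq_square)
      then show ?thesis by blast
    next
      case False
      then have "c = 1" "c' = 0" using c ne by auto
      then have "pp * (pp * (W' - W) - 1) = 0" using W by (simp add: algebra_simps power2_eq_square)
      then show ?thesis by blast
    qed
    then obtain Z where "pp * (pp * Z - 1) = (0::'a okt)" by blast
    then have "pp * Z - 1 = 0" by (rule pp_cancel)
    then have "pp dvd (1::'a okt)" by (metis dvd_triv_left eq_iff_diff_eq_0)
    then show False using nd_one by blast
  qed
  show ?thesis using ex uniq by blast
qed

lemma pi_coeff_char: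
  assumes "\<not> pp dvd (U::'a::dpar okt)"
  shows "pcond U (pi_coeff (DD TYPE('a)) (Rep U))"
proof -
  have "pi_coeff (DD TYPE('a)) (Rep U) = (THE c. pcond U c)"
    unfolding pi_coeff_def pcond_iff ..
  then show ?thesis using theI'[OF pcond_ex1[OF assms]] by simp
qed

lemma same_coeff_sum:
  assumes "\<not> pp dvd (U1::'a::dpar okt)" "\<not> pp dvd U2"
    and "pi_coeff (DD TYPE('a)) (Rep U1) = pi_coeff (DD TYPE('a)) (Rep U2)"
  shows "pp ^ 2 dvd U1 + U2"
proof -
  define c where "c = pi_coeff (DD TYPE('a)) (Rep U1)"
  obtain W1 where W1: "U1 = 1 + of_nat c * pp + pp ^ 2 * W1"
    using pi_coeff_char[OF assms(1)] unfolding pcond_def c_def by blast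
  obtain W2 where W2: "U2 = 1 + of_nat c * pp + pp ^ 2 * W2"
    using pi_coeff_char[OF assms(2)] unfolding pcond_def c_def assms(3) by blast
  obtain i where i: "(2::'a okt) = pp ^ 2 * i" using two_eq by blast
  have "U1 + U2 = 2 * (1 + of_nat c * pp) + pp ^ 2 * (W1 + W2)" using W1 W2 by (simp add: algebra_simps)
  also have "\<dots> = pp ^ 2 * (i * (1 + of_nat c * pp) + W1 + W2)" unfolding i by (simp add: algebra_simps)
  finally show ?thesis by simp
qed

lemma offs_ne:
  fixes k d o1 o2 :: nat
  assumes "(k + o1) mod d = (k + o2) mod d" "o1 < d" "o2 < d"
  shows "o1 = o2"
proof -
  have "[k + o1 = k + o2] (mod d)" using assms(1) by (simp add: cong_def)
  then have "[o1 = o2] (mod d)" by (simp add: cong_add_lcancel_nat)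
  then show ?thesis using assms(2,3) by (rule cong_less_modulus_unique_nat)
qed

lemma exp_shift:
  fixes r k d M off :: nat
  assumes "r mod d = (k + off) mod d" "r \<le> M" "0 < d"
  shows "\<exists>e. r + d * e = k + d * M + off"
proof -
  define q where "q = r div d"
  define p where "p = (k + off) div d"
  define c where "c = r mod d"
  have qM: "q \<le> M" using assms(2) div_le_dividend[of r d] q_def by linarith
  have r: "r = d * q + c" by (simp add: q_def c_def)
  have ko: "k + off = d * p + c" using assms(1) by (simp add: p_def c_def)
  have m1: "d * (M - q) = d * M - d * q" by (simp add: diff_mult_distrib2)
  have m2: "d * q \<le> d * M" using qM by simp
  have "r + d * (p + (M - q)) = k + d * M + off"
    unfolding distrib_left m1 using r ko m2 by linarith
  then show ?thesis by blast
qed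

lemma term_eq: "(pp::'a::dpar okt) ^ r * U * (pp ^ e * \<xi>) ^ d = pp ^ (r + d * e) * (U * \<xi> ^ d)"
proof -
  have "(pp ^ e * \<xi>) ^ d = pp ^ (e * d) * \<xi> ^ d" by (simp add: power_mult_distrib power_mult)
  then show ?thesis by (simp add: power_add mult.commute mult.left_commute)
qed

definition CP :: "'a::dpar itself \<Rightarrow> nat \<Rightarrow> nat \<Rightarrow> nat \<Rightarrow> bool" where
  "CP T m oC oE \<longleftrightarrow> (\<forall>uA uB uC uE::'a okt. \<not> pp dvd uA \<longrightarrow> \<not> pp dvd uB \<longrightarrow> \<not> pp dvd uC \<longrightarrow> \<not> pp dvd uE
     \<longrightarrow> pp ^ 2 dvd uA + uB \<longrightarrow>
     (\<exists>tA \<xi>C \<xi>E. uA * tA ^ (2 * m) + uB + pp ^ oC * uC * \<xi>C ^ (2 * m) + pp ^ oE * uE * \<xi>E ^ (2 * m) = 0))"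

lemma CP1: "odd m \<Longrightarrow> CP TYPE('a::dpar) m 2 3"
  unfolding CP_def using core1 by blast

lemma CP2: "odd m \<Longrightarrow> CP TYPE('a::dpar) m 3 4"
  unfolding CP_def using core2 by blast

lemma lemma15_gen:
  fixes D :: int and m d s k :: nat and a :: "nat \<Rightarrow> ok"
  assumes DD: "D = dval TYPE('a::dpar)"
    and m: "odd m" "m \<ge> 3" and dm: "d = 2 * m"
    and coeffs: "\<forall>i<s. a i \<in> O_set \<and> a i \<noteq> ok_zero"
    and k: "k < d"
    and two: "\<exists>i<s. \<exists>j<s. i \<noteq> j \<and> level D d (a i) = k \<and> level D d (a j) = k
                 \<and> var_pi_coeff D (a i) = var_pi_coeff D (a j)"
    and lv: "((\<exists>i<s. level D d (a i) = (k + 2) mod d) \<and> (\<exists>j<s. level D d (a j) = (k + 3) mod d))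
           \<or> ((\<exists>i<s. level D d (a i) = (k + 3) mod d) \<and> (\<exists>j<s. level D d (a j) = (k + 4) mod d))"
  shows "\<exists>x :: nat \<Rightarrow> ok. (\<forall>i<s. x i \<in> O_set) \<and> (\<exists>i<s. x i \<noteq> ok_zero)
           \<and> ok_sum (\<lambda>i. ok_mul D (a i) (ok_pow D (x i) d)) s = ok_zero"
proof -
  have d6: "6 \<le> d" using m dm by simp
  have d0: "0 < d" using d6 by simp
  define r where "r = (\<lambda>i. ok_ord D (a i))"
  define U where "U = (\<lambda>i. Abs (ok_unitpart D (a i)) :: 'a okt)"
  define A where "A = (\<lambda>i. Abs (a i) :: 'a okt)"
  have dec: "A i = pp ^ r i * U i \<and> \<not> pp dvd U i \<and> ok_unitpart D (a i) = Rep (U i)" if iis: "i < s" for i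
  proof -
    obtain U' where U': "(Abs (a i) :: 'a okt) = pp ^ ok_ord D (a i) * U'" "\<not> pp dvd U'"
      "ok_unitpart D (a i) = Rep U'"
      using decomp[of "a i", where 'a='a] coeffs iis unfolding DD[symmetric] by blast
    have "U i = U'" unfolding U_def U'(3) by (simp add: Rep_inverse)
    then show ?thesis using U' by (simp add: A_def r_def)
  qed
  have lvl: "level D d (a i) = r i mod d" for i by (simp add: level_def r_def)
  obtain i0 j0 where ij: "i0 < s" "j0 < s" "i0 \<noteq> j0" "r i0 mod d = (k + 0) mod d" "r j0 mod d = (k + 0) mod d"
    "var_pi_coeff D (a i0) = var_pi_coeff D (a j0)"
    using two k by (auto simp: lvl)
  obtain iC iE oC oE where C: "iC < s" "iE < s" "r iC mod d = (k + oC) mod d" "r iE mod d = (k + oE) mod d"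
    "0 < oC" "oC < oE" "oE < d" "CP TYPE('a) m oC oE"
  proof -
    from lv show ?thesis
    proof
      assume "(\<exists>i<s. level D d (a i) = (k + 2) mod d) \<and> (\<exists>j<s. level D d (a j) = (k + 3) mod d)"
      then obtain i j where "i < s" "j < s" "r i mod d = (k + 2) mod d" "r j mod d = (k + 3) mod d"
        by (auto simp: lvl)
      then show ?thesis using that[of i j 2 3] CP1[OF m(1)] d6 by simp
    next
      assume "(\<exists>i<s. level D d (a i) = (k + 3) mod d) \<and> (\<exists>j<s. level D d (a j) = (k + 4) mod d)"
      then obtain i j where "i < s" "j < s" "r i mod d = (k + 3) mod d" "r j mod d = (k + 4) mod d"
        by (auto simp: lvl)
      then show ?thesis using that[of i j 3 4] CP2[OF m(1)] d6 by simp
    qed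
  qed
  have ne: "i0 \<noteq> iC" "i0 \<noteq> iE" "j0 \<noteq> iC" "j0 \<noteq> iE" "iC \<noteq> iE"
  proof -
    have "(k + 0) mod d \<noteq> (k + oC) mod d" using offs_ne[of k 0 d oC] C d0 by auto
    moreover have "(k + 0) mod d \<noteq> (k + oE) mod d" using offs_ne[of k 0 d oE] C d0 by auto
    moreover have "(k + oC) mod d \<noteq> (k + oE) mod d" using offs_ne[of k oC d oE] C by auto
    ultimately show "i0 \<noteq> iC" "i0 \<noteq> iE" "j0 \<noteq> iC" "j0 \<noteq> iE" "iC \<noteq> iE" using ij C by metis+
  qed
  have vp: "var_pi_coeff D (a i) = pi_coeff (DD TYPE('a)) (Rep (U i))" if "i < s" for i
    using dec[OF that] unfolding DD[symmetric] by (simp add: var_pi_coeff_def)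
  have AB: "pp ^ 2 dvd U i0 + U j0"
    using same_coeff_sum[of "U i0" "U j0"] dec[OF ij(1)] dec[OF ij(2)] vp[OF ij(1)] vp[OF ij(2)] ij(6) by simp
  obtain tA \<xi>C \<xi>E where core: "U i0 * tA ^ d + U j0 + pp ^ oC * U iC * \<xi>C ^ d + pp ^ oE * U iE * \<xi>E ^ d = 0"
    using C(8) dec[OF ij(1)] dec[OF ij(2)] dec[OF C(1)] dec[OF C(2)] AB unfolding CP_def dm by blast
  define M where "M = r i0 + r j0 + r iC + r iE"
  define L where "L = k + d * M"
  obtain e0 where e0: "r i0 + d * e0 = L + 0" using exp_shift[OF ij(4) _ d0, of M] by (auto simp: M_def L_def)
  obtain e1 where e1: "r j0 + d * e1 = L + 0" using exp_shift[OF ij(5) _ d0, of M] by (auto simp: M_def L_def)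
  obtain eC where eC: "r iC + d * eC = L + oC" using exp_shift[OF C(3) _ d0, of M] by (auto simp: M_def L_def)
  obtain eE where eE: "r iE + d * eE = L + oE" using exp_shift[OF C(4) _ d0, of M] by (auto simp: M_def L_def)
  define X where "X = (\<lambda>i. if i = i0 then pp ^ e0 * tA else if i = j0 then pp ^ e1 * 1
     else if i = iC then pp ^ eC * \<xi>C else if i = iE then pp ^ eE * \<xi>E else (0::'a okt))"
  define F where "F = (\<lambda>i. A i * X i ^ d)"
  have F0: "F i = 0" if "i \<notin> {i0, j0, iC, iE}" for i
    using that d0 by (simp add: F_def X_def zero_power)
  have Fs: "sum F {..<s} = sum F {i0, j0, iC, iE}"
    by (rule sum.mono_neutral_right) (use ij C F0 in auto)
  also have "\<dots> = F i0 + (F j0 + (F iC + F iE))" using ne ij(3) by simp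
  also have "\<dots> = pp ^ L * (U i0 * tA ^ d + U j0 + pp ^ oC * U iC * \<xi>C ^ d + pp ^ oE * U iE * \<xi>E ^ d)"
  proof -
    have "F i0 = pp ^ L * (U i0 * tA ^ d)"
      using dec[OF ij(1)] e0 term_eq[of "r i0" "U i0" e0 tA d] by (simp add: F_def X_def)
    moreover have "F j0 = pp ^ L * (U j0 * 1 ^ d)"
      using dec[OF ij(2)] e1 term_eq[of "r j0" "U j0" e1 1 d] ij(3) by (simp add: F_def X_def)
    moreover have "F iC = pp ^ (L + oC) * (U iC * \<xi>C ^ d)"
      using dec[OF C(1)] eC term_eq[of "r iC" "U iC" eC \<xi>C d] ne by (simp add: F_def X_def)
    moreover have "F iE = pp ^ (L + oE) * (U iE * \<xi>E ^ d)"
      using dec[OF C(2)] eE term_eq[of "r iE" "U iE" eE \<xi>E d] ne by (simp add: F_def X_def)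
    ultimately show ?thesis by (simp add: power_add algebra_simps)
  qed
  also have "\<dots> = 0" using core by simp
  finally have S0: "sum F {..<s} = 0" .
  define x where "x = (\<lambda>i. Rep (X i))"
  have "ok_sum (\<lambda>i. ok_mul D (a i) (ok_pow D (x i) d)) s = ok_sum (\<lambda>i. Rep (F i)) s"
  proof (rule ok_sum_cong)
    fix i assume "i < s"
    then have "a i = Rep (A i)" using coeffs by (simp add: A_def Rep_Abs)
    then show "ok_mul D (a i) (ok_pow D (x i) d) = Rep (F i)"
      by (simp add: F_def x_def Rep_ops Rep_pow DD)
  qed
  also have "\<dots> = Rep (sum F {..<s})" by (rule Rep_sum)
  also have "\<dots> = ok_zero" using S0 by (simp add: Rep_ops)
  finally have sum: "ok_sum (\<lambda>i. ok_mul D (a i) (ok_pow D (x i) d)) s = ok_zero" .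
  have "x j0 \<noteq> ok_zero"
  proof
    assume "x j0 = ok_zero"
    then have "Rep (X j0) = Rep (0::'a okt)" by (simp add: x_def Rep_ops)
    then have "X j0 = 0" by (simp add: Rep_eq_iff)
    then show False using ij(3) pp_pow_nz[of e1, where 'a='a] by (simp add: X_def)
  qed
  then show ?thesis using sum ij(2) by (intro exI[of _ x]) (auto simp: x_def Rep_in)
qed

datatype tpa = TPAC

instantiation tpa :: dpar
begin
definition dval_tpa_def: "dval (_::tpa itself) = (2::int)"
instance by standard (simp add: dval_tpa_def)
end

datatype tpb = TPBC

instantiation tpb :: dpar
begin
definition dval_tpb_def: "dval (_::tpb itself) = (-2::int)"
instance by standard (simp add: dval_tpb_def)
end

datatype tpc = TPCC

instantiation tpc :: dpar
begin
definition dval_tpc_def: "dval (_::tpc itself) = (10::int)"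
instance by standard (simp add: dval_tpc_def)
end

datatype tpd = TPDC

instantiation tpd :: dpar
begin
definition dval_tpd_def: "dval (_::tpd itself) = (-10::int)"
instance by standard (simp add: dval_tpd_def)
end

datatype tpe = TPEC

instantiation tpe :: dpar
begin
definition dval_tpe_def: "dval (_::tpe itself) = (-1::int)"
instance by standard (simp add: dval_tpe_def)
end

datatype tpf = TPFC

instantiation tpf :: dpar
begin
definition dval_tpf_def: "dval (_::tpf itself) = (-5::int)"
instance by standard (simp add: dval_tpf_def)
end

theorem lemma15:
  fixes D :: int and m d s k :: nat and a :: "nat \<Rightarrow> ok"
  assumes K: "D \<in> {2, -2, 10, -10, -1, -5}"
    and m: "odd m" "m \<ge> 3" and dm: "d = 2 * m"
    and coeffs: "\<forall>i<s. a i \<in> O_set \<and> a i \<noteq> ok_zero"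
    and k: "k < d"
    and two: "\<exists>i<s. \<exists>j<s. i \<noteq> j \<and> level D d (a i) = k \<and> level D d (a j) = k
                 \<and> var_pi_coeff D (a i) = var_pi_coeff D (a j)"
    and lv: "((\<exists>i<s. level D d (a i) = (k + 2) mod d) \<and> (\<exists>j<s. level D d (a j) = (k + 3) mod d))
           \<or> ((\<exists>i<s. level D d (a i) = (k + 3) mod d) \<and> (\<exists>j<s. level D d (a j) = (k + 4) mod d))"
  shows "\<exists>x :: nat \<Rightarrow> ok. (\<forall>i<s. x i \<in> O_set) \<and> (\<exists>i<s. x i \<noteq> ok_zero)
           \<and> ok_sum (\<lambda>i. ok_mul D (a i) (ok_pow D (x i) d)) s = ok_zero"
proof -
  from K consider "D = 2" | "D = -2" | "D = 10" | "D = -10" | "D = -1" | "D = -5" by auto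
  then show ?thesis
  proof cases
    case 1
    then have "D = dval TYPE(tpa)" by (simp add: dval_tpa_def)
    from lemma15_gen[OF this m dm coeffs k two lv] show ?thesis .
  next
    case 2
    then have "D = dval TYPE(tpb)" by (simp add: dval_tpb_def)
    from lemma15_gen[OF this m dm coeffs k two lv] show ?thesis .
  next
    case 3
    then have "D = dval TYPE(tpc)" by (simp add: dval_tpc_def)
    from lemma15_gen[OF this m dm coeffs k two lv] show ?thesis .
  next
    case 4
    then have "D = dval TYPE(tpd)" by (simp add: dval_tpd_def)
    from lemma15_gen[OF this m dm coeffs k two lv] show ?thesis .
  next
    case 5
    then have "D = dval TYPE(tpe)" by (simp add: dval_tpe_def)
    from lemma15_gen[OF this m dm coeffs k two lv] show ?thesis .
  next
    case 6
    then have "D = dval TYPE(tpf)" by (simp add: dval_tpf_def)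
    from lemma15_gen[OF this m dm coeffs k two lv] show ?thesis .
  qed
qed

end
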